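(* Let $c\in(0,1]$ be a constant and consider $m_1\times m_2$ grid graphs with $m_1\ge m_2$. For a random MRPP instance with $n=c\,m_1m_2$ robots on the $m_1\times m_2$ grid, the minimum makespan over all feasible solutions is $m_1+m_2-o(m_1)$ with probability arbitrarily close to $1$ as $m_1\to\infty$; that is, there is a function $f(m_1)=o(m_1)$ such that the probability that the minimum makespan is at least $m_1+m_2-f(m_1)$ tends to $1$ as $m_1\to\infty$. *)

theory Defs
  imports Complex_Main "HOL-Library.FuncSet" "HOL-Library.Landau_Symbols"
begin

definition grid_vertices :: "nat \<Rightarrow> nat \<Rightarrow> (nat \<times> nat) set" where
  "grid_vertices m1 m2 = {0..<m1} \<times> {0..<m2}"

definition grid_adj :: "nat \<times> nat \<Rightarrow> nat \<times> nat \<Rightarrow> bool" where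
  "grid_adj u v \<longleftrightarrow>
     (fst u = fst v \<and> (snd u = Suc (snd v) \<or> snd v = Suc (snd u))) \<or>
     (snd u = snd v \<and> (fst u = Suc (fst v) \<or> fst v = Suc (fst u)))"

definition configs :: "nat \<Rightarrow> nat \<Rightarrow> nat \<Rightarrow> (nat \<Rightarrow> nat \<times> nat) set" where
  "configs m1 m2 n = {s \<in> {..<n} \<rightarrow>\<^sub>E grid_vertices m1 m2. inj_on s {..<n}}"

text \<open>A feasible MRPP solution of makespan T from start s to goal g:
  P t i is the position of robot i at time t.\<close>
definition mrpp_solution ::
  "nat \<Rightarrow> nat \<Rightarrow> nat \<Rightarrow> (nat \<Rightarrow> nat \<times> nat) \<Rightarrow> (nat \<Rightarrow> nat \<times> nat)
     \<Rightarrow> nat \<Rightarrow> (nat \<Rightarrow> nat \<Rightarrow> nat \<times> nat) \<Rightarrow> bool" where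
  "mrpp_solution m1 m2 n s g T P \<longleftrightarrow>
     (\<forall>i<n. P 0 i = s i \<and> P T i = g i) \<and>
     (\<forall>t\<le>T. (\<forall>i<n. P t i \<in> grid_vertices m1 m2) \<and> inj_on (P t) {..<n}) \<and>
     (\<forall>t<T. \<forall>i<n. P (Suc t) i = P t i \<or> grid_adj (P t i) (P (Suc t) i)) \<and>
     (\<forall>t<T. \<forall>i<n. \<forall>j<n. i \<noteq> j \<longrightarrow>
          \<not> (P (Suc t) i = P t j \<and> P (Suc t) j = P t i))"

definition feasible_makespan ::
  "nat \<Rightarrow> nat \<Rightarrow> nat \<Rightarrow> (nat \<Rightarrow> nat \<times> nat) \<Rightarrow> (nat \<Rightarrow> nat \<times> nat) \<Rightarrow> nat \<Rightarrow> bool" where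
  "feasible_makespan m1 m2 n s g T \<longleftrightarrow> (\<exists>P. mrpp_solution m1 m2 n s g T P)"

text \<open>Probability, for a uniformly random instance (independent uniformly random
  start and goal configurations), that the minimum makespan over all feasible
  solutions is at least b (the minimum over an empty set being +infinity).\<close>
definition prob_min_makespan_ge :: "nat \<Rightarrow> nat \<Rightarrow> nat \<Rightarrow> real \<Rightarrow> real" where
  "prob_min_makespan_ge m1 m2 n b =
     real (card {(s, g). s \<in> configs m1 m2 n \<and> g \<in> configs m1 m2 n \<and>
                   (\<forall>T. feasible_makespan m1 m2 n s g T \<longrightarrow> real T \<ge> b)})
     / real (card (configs m1 m2 n \<times> configs m1 m2 n))"

end

theory Submission
  imports Defs "HOL-Real_Asymp.Real_Asymp"
begin

definition Inj :: "'a set \<Rightarrow> nat \<Rightarrow> (nat \<Rightarrow> 'a) set" where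
  "Inj V k = {s \<in> {..<k} \<rightarrow>\<^sub>E V. inj_on s {..<k}}"

definition BadS :: "'a set \<Rightarrow> 'a set \<Rightarrow> 'a set \<Rightarrow> nat \<Rightarrow> ((nat \<Rightarrow> 'a) \<times> (nat \<Rightarrow> 'a)) set" where
  "BadS V A B k = {(s,g). s \<in> Inj V k \<and> g \<in> Inj V k \<and> (\<forall>i<k. \<not> (s i \<in> A \<and> g i \<in> B))}"

lemma card_Inj: "finite V \<Longrightarrow> card (Inj V k) = prod ((-) (card V)) {0..<k}"
  unfolding Inj_def using card_inj_on_subset_funcset[of "{..<k}" V "{..<k}"] by simp

lemma finite_Inj: "finite V \<Longrightarrow> finite (Inj V k)"
  unfolding Inj_def by (auto intro!: finite_PiE)

lemma finite_BadS: "finite V \<Longrightarrow> finite (BadS V A B k)"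
  by (rule finite_subset[of _ "Inj V k \<times> Inj V k"]) (auto simp: BadS_def finite_Inj)

lemma BadS_sub:
  "BadS V A B (Suc k) \<subseteq> (\<lambda>((s,g),(u,v)). (s(k:=u), g(k:=v))) `
     Sigma (BadS V A B k) (\<lambda>(s,g). ((V - s`{..<k}) \<times> (V - g`{..<k})) - ((A - s`{..<k}) \<times> (B - g`{..<k})))"
proof
  fix p assume p: "p \<in> BadS V A B (Suc k)"
  obtain s' g' where pp: "p = (s',g')" by (cases p)
  define s where "s = s'(k:=undefined)"
  define g where "g = g'(k:=undefined)"
  have s'I: "s' \<in> Inj V (Suc k)" and g'I: "g' \<in> Inj V (Suc k)"
    and nb: "\<forall>i<Suc k. \<not> (s' i \<in> A \<and> g' i \<in> B)" using p pp by (auto simp: BadS_def)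
  have sI: "s \<in> Inj V k" using s'I unfolding Inj_def s_def
    by (auto simp: PiE_def extensional_def inj_on_def)
  have gI: "g \<in> Inj V k" using g'I unfolding Inj_def g_def
    by (auto simp: PiE_def extensional_def inj_on_def)
  have img: "s ` {..<k} = s' ` {..<k}" "g ` {..<k} = g' ` {..<k}" by (auto simp: s_def g_def)
  have sk: "s' k \<in> V - s`{..<k}"
  proof -
    have i: "inj_on s' {..<Suc k}" and m: "s' k \<in> V" using s'I unfolding Inj_def by auto
    have "s' k \<notin> s' ` {..<k}" using inj_on_image_mem_iff[OF i, of k "{..<k}"] by auto
    then show ?thesis using m img by auto
  qed
  have gk: "g' k \<in> V - g`{..<k}"
  proof -
    have i: "inj_on g' {..<Suc k}" and m: "g' k \<in> V" using g'I unfolding Inj_def by auto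
    have "g' k \<notin> g' ` {..<k}" using inj_on_image_mem_iff[OF i, of k "{..<k}"] by auto
    then show ?thesis using m img by auto
  qed
  have "(s,g) \<in> BadS V A B k" using sI gI nb by (auto simp: BadS_def s_def g_def)
  moreover have "(s' k, g' k) \<in> ((V - s`{..<k}) \<times> (V - g`{..<k})) - ((A - s`{..<k}) \<times> (B - g`{..<k}))"
    using sk gk nb by auto
  moreover have "p = (s(k:=s' k), g(k:=g' k))" by (simp add: pp s_def g_def)
  ultimately show "p \<in> (\<lambda>((s,g),(u,v)). (s(k:=u), g(k:=v))) `
     Sigma (BadS V A B k) (\<lambda>(s,g). ((V - s`{..<k}) \<times> (V - g`{..<k})) - ((A - s`{..<k}) \<times> (B - g`{..<k})))"
    by (intro image_eqI[where x="((s,g),(s' k, g' k))"]) auto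
qed

lemma card_C:
  assumes V: "finite V" and AV: "A \<subseteq> V" and BV: "B \<subseteq> V" and cA: "a \<le> card A" and cB: "a \<le> card B"
    and s: "s \<in> Inj V k" and g: "g \<in> Inj V k"
  shows "card (((V - s`{..<k}) \<times> (V - g`{..<k})) - ((A - s`{..<k}) \<times> (B - g`{..<k})))
         \<le> (card V - k) * (card V - k) - (a - k) * (a - k)"
proof -
  have cs: "card (s`{..<k}) = k" and sV: "s`{..<k} \<subseteq> V" using s unfolding Inj_def
    by (auto simp: card_image PiE_def)
  have cg: "card (g`{..<k}) = k" and gV: "g`{..<k} \<subseteq> V" using g unfolding Inj_def
    by (auto simp: card_image PiE_def)
  have c1: "card (V - s`{..<k}) = card V - k" using cs sV V by (simp add: card_Diff_subset finite_subset)
  have c2: "card (V - g`{..<k}) = card V - k" using cg gV V by (simp add: card_Diff_subset finite_subset)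
  have fA: "finite A" "finite B" using AV BV V finite_subset by auto
  have c3: "card (A - s`{..<k}) \<ge> a - k"
    using diff_card_le_card_Diff[of "s`{..<k}" A] cs cA fA by auto
  have c4: "card (B - g`{..<k}) \<ge> a - k"
    using diff_card_le_card_Diff[of "g`{..<k}" B] cg cB fA by auto
  have sub: "(A - s`{..<k}) \<times> (B - g`{..<k}) \<subseteq> (V - s`{..<k}) \<times> (V - g`{..<k})" using AV BV by auto
  have "card (((V - s`{..<k}) \<times> (V - g`{..<k})) - ((A - s`{..<k}) \<times> (B - g`{..<k})))
     = (card V - k) * (card V - k) - card (A - s`{..<k}) * card (B - g`{..<k})"
    using card_Diff_subset[OF _ sub] V fA by (simp add: card_cartesian_product c1 c2)
  also have "\<dots> \<le> (card V - k) * (card V - k) - (a - k) * (a - k)"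
    using c3 c4 by (intro diff_le_mono2 mult_le_mono) auto
  finally show ?thesis .
qed

lemma BadS_step:
  assumes V: "finite V" and AV: "A \<subseteq> V" and BV: "B \<subseteq> V" and cA: "a \<le> card A" and cB: "a \<le> card B"
  shows "card (BadS V A B (Suc k)) \<le> card (BadS V A B k) * ((card V - k) * (card V - k) - (a - k) * (a - k))"
proof -
  let ?C = "\<lambda>(s,g). ((V - s`{..<k}) \<times> (V - g`{..<k})) - ((A - s`{..<k}) \<times> (B - g`{..<k}))"
  have fin: "finite (Sigma (BadS V A B k) ?C)"
    using V finite_BadS[OF V] by (intro finite_SigmaI) auto
  have "card (BadS V A B (Suc k)) \<le> card ((\<lambda>((s,g),(u,v)). (s(k:=u), g(k:=v))) ` Sigma (BadS V A B k) ?C)"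
    by (rule card_mono[OF finite_imageI[OF fin] BadS_sub])
  also have "\<dots> \<le> card (Sigma (BadS V A B k) ?C)" by (rule card_image_le[OF fin])
  also have "\<dots> = (\<Sum>p\<in>BadS V A B k. card (?C p))"
    using V finite_BadS[OF V] by (intro card_SigmaI) auto
  also have "\<dots> \<le> (\<Sum>p\<in>BadS V A B k. (card V - k) * (card V - k) - (a - k) * (a - k))"
    by (intro sum_mono) (auto simp: BadS_def intro!: card_C[OF V AV BV cA cB])
  finally show ?thesis by (simp add: mult.commute)
qed

lemma BadS_le_Inj: "finite V \<Longrightarrow> card (BadS V A B k) \<le> card (Inj V k) ^ 2"
proof -
  assume V: "finite V"
  have "BadS V A B k \<subseteq> Inj V k \<times> Inj V k" by (auto simp: BadS_def)
  then have "card (BadS V A B k) \<le> card (Inj V k \<times> Inj V k)"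
    by (intro card_mono) (auto simp: finite_Inj V)
  then show ?thesis by (simp add: card_cartesian_product power2_eq_square)
qed

lemma factor_bound:
  fixes N a k :: nat
  assumes "a \<le> N" "2 * k < a"
  shows "real ((N - k) * (N - k) - (a - k) * (a - k)) \<le> real ((N - k) * (N - k)) * (1 - (real a / (2 * real N))^2)"
proof -
  have ak: "k < a" "k < N" using assms by auto
  have N0: "real N > 0" using ak by simp
  have e1: "real ((N - k) * (N - k) - (a - k) * (a - k)) = (real N - k)^2 - (real a - k)^2"
    using ak assms by (simp add: of_nat_diff mult_le_mono power2_eq_square)
  have e2: "real ((N - k) * (N - k)) = (real N - k)^2" using ak by (simp add: of_nat_diff power2_eq_square)
  have h1: "(real a - k)^2 \<ge> (real a / 2)^2"
    using assms by (intro power_mono) auto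
  have h2: "(real N - k)^2 \<le> (real N)^2" using ak by (intro power_mono) auto
  have "(real N - k)^2 * (real a / (2 * real N))^2 = (real N - k)^2 / (real N)^2 * (real a / 2)^2"
    using N0 by (simp add: power_divide field_simps)
  also have "\<dots> \<le> 1 * (real a / 2)^2"
    using h2 N0 by (intro mult_right_mono) auto
  finally have h3: "(real N - k)^2 * (real a / (2 * real N))^2 \<le> (real a / 2)^2" by simp
  show ?thesis unfolding e1 e2 using h1 h3 by (simp add: algebra_simps)
qed

lemma BadS_bound:
  assumes V: "finite V" and AV: "A \<subseteq> V" and BV: "B \<subseteq> V" and cA: "a \<le> card A" and cB: "a \<le> card B"
    and K: "2 * K \<le> a"
  shows "k \<le> card V \<Longrightarrow> real (card (BadS V A B k)) \<le> real (card (Inj V k))^2 * (1 - (real a / (2 * real (card V)))^2) ^ (min k K)"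
proof (induction k)
  case 0
  then show ?case using BadS_le_Inj[OF V, of A B 0] by simp
next
  case (Suc k)
  define N where "N = card V"
  define q where "q = 1 - (real a / (2 * real N))^2"
  have aN: "a \<le> N" using cA card_mono[OF V AV] N_def by simp
  have kN: "k < N" using Suc.prems N_def by simp
  have q0: "0 \<le> q" "q \<le> 1"
  proof -
    have "real a / (2 * real N) \<le> 1" using aN kN by (simp add: field_simps)
    moreover have "real a / (2 * real N) \<ge> 0" by simp
    ultimately have "(real a / (2 * real N))^2 \<le> 1" by (simp add: power_le_one)
    then show "0 \<le> q" "q \<le> 1" by (auto simp: q_def)
  qed
  have cI: "card (Inj V (Suc k)) = card (Inj V k) * (N - k)"
    using card_Inj[OF V] N_def by simp
  have IH: "real (card (BadS V A B k)) \<le> real (card (Inj V k))^2 * q ^ (min k K)"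
    using Suc.IH Suc.prems q_def N_def by simp
  have st: "real (card (BadS V A B (Suc k))) \<le> real (card (BadS V A B k)) * real ((N - k) * (N - k) - (a - k) * (a - k))"
    using BadS_step[OF V AV BV cA cB, of k] N_def by (simp flip: of_nat_mult)
  have fac: "real ((N - k) * (N - k) - (a - k) * (a - k)) * q ^ (min k K) \<le> real ((N - k) * (N - k)) * q ^ (min (Suc k) K)"
  proof (cases "k < K")
    case True
    then have "min (Suc k) K = Suc (min k K)" "min k K = k" by auto
    then show ?thesis using factor_bound[OF aN, of k] True K q0 unfolding q_def
      by (simp add: mult.assoc[symmetric] mult_right_mono)
  next
    case False
    then have "min (Suc k) K = min k K" by auto
    moreover have "real ((N - k) * (N - k) - (a - k) * (a - k)) \<le> real ((N - k) * (N - k))" by (simp only: of_nat_le_iff diff_le_self)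
    ultimately show ?thesis using q0 by (simp add: mult_right_mono)
  qed
  have "real (card (BadS V A B (Suc k))) \<le> real (card (Inj V k))^2 * q ^ (min k K) * real ((N - k) * (N - k) - (a - k) * (a - k))"
    using st IH by (intro order.trans[OF st] mult_right_mono) auto
  also have "\<dots> = real (card (Inj V k))^2 * (real ((N - k) * (N - k) - (a - k) * (a - k)) * q ^ (min k K))"
    by simp
  also have "\<dots> \<le> real (card (Inj V k))^2 * (real ((N - k) * (N - k)) * q ^ (min (Suc k) K))"
    by (intro mult_left_mono fac) auto
  also have "\<dots> = real (card (Inj V (Suc k)))^2 * q ^ (min (Suc k) K)"
    unfolding cI by (simp add: power2_eq_square)
  finally show ?case unfolding q_def N_def .
qed


lemma dist_bound:
  assumes sol: "mrpp_solution m1 m2 n s g T P" and i: "i < n"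
  shows "t \<le> T \<Longrightarrow> \<bar>int (fst (P t i)) - int (fst (s i))\<bar> + \<bar>int (snd (P t i)) - int (snd (s i))\<bar> \<le> int t"
proof (induction t)
  case 0
  then show ?case using sol i by (simp add: mrpp_solution_def)
next
  case (Suc t)
  have "P (Suc t) i = P t i \<or> grid_adj (P t i) (P (Suc t) i)"
    using sol i Suc.prems by (simp add: mrpp_solution_def)
  then have "\<bar>int (fst (P (Suc t) i)) - int (fst (P t i))\<bar> + \<bar>int (snd (P (Suc t) i)) - int (snd (P t i))\<bar> \<le> 1"
    by (auto simp: grid_adj_def)
  then show ?case using Suc.IH Suc.prems by linarith
qed

lemma makespan_ge:
  assumes "feasible_makespan m1 m2 n s g T" "i < n"
  shows "\<bar>int (fst (g i)) - int (fst (s i))\<bar> + \<bar>int (snd (g i)) - int (snd (s i))\<bar> \<le> int T"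
proof -
  obtain P where sol: "mrpp_solution m1 m2 n s g T P" using assms unfolding feasible_makespan_def by auto
  have "P T i = g i" using sol assms(2) by (simp add: mrpp_solution_def)
  then show ?thesis using dist_bound[OF sol assms(2), of T] by simp
qed

lemma configs_Inj: "configs m1 m2 n = Inj (grid_vertices m1 m2) n"
  by (simp add: configs_def Inj_def)

lemma a_cube_bound:
  fixes d h m :: nat and r :: real
  assumes r1: "1 \<le> r" and m: "real m = r^4" and d3: "r^9 \<le> real d ^ 3" and h1: "1 \<le> h" and hm: "h \<le> m"
  shows "r * (real m * real h)^2 \<le> real (d * min d h) ^ 3"
proof (cases "h \<le> d")
  case True
  then have "real (d * min d h) ^ 3 = real d ^ 3 * real h ^ 3" by (simp add: power_mult_distrib)
  also have "\<dots> \<ge> r^9 * real h ^ 2"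
  proof -
    have "real h ^ 2 \<le> real h ^ 3" using h1 by (intro power_increasing) auto
    then show ?thesis using d3 r1 by (intro mult_mono) auto
  qed
  finally have "r^9 * real h ^ 2 \<le> real (d * min d h) ^ 3" .
  moreover have "r * (real m * real h)^2 = r^9 * real h ^ 2" using m by (simp add: power_mult_distrib flip: power_mult power_Suc)
  ultimately show ?thesis by simp
next
  case False
  then have "real (d * min d h) ^ 3 = (real d ^ 3)^2" by (simp add: power_mult_distrib flip: power_mult)
  also have "\<dots> \<ge> (r^9)^2" using d3 r1 by (intro power_mono) auto
  finally have A: "(r^9)^2 \<le> real (d * min d h) ^ 3" .
  have "r * (real m * real h)^2 \<le> r * (real m * real m)^2"
    using hm r1 by (intro mult_left_mono power_mono mult_left_mono) auto
  also have "\<dots> = r^17" using m by (simp flip: power_mult power_add power_Suc add: power_mult_distrib power2_eq_square)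
  also have "\<dots> \<le> r^18" using r1 by (intro power_increasing) auto
  also have "\<dots> = (r^9)^2" by (simp flip: power_mult)
  finally show ?thesis using A by linarith
qed

lemma instance_bound:
  fixes d h m n :: nat and r b :: real
  assumes r1: "1 \<le> r" and m: "real m = r^4" and d3: "r^9 \<le> real d ^ 3"
    and h1: "1 \<le> h" and hm: "h \<le> m" and d2: "2 \<le> d" and dm: "d \<le> m"
    and nN: "n \<le> m * h" and na: "real d * real h \<le> 4 * real n"
    and b: "b \<le> real m + real h - 4 * real d"
  shows "prob_min_makespan_ge m h n b \<ge> 1 - exp (- r / 16)"
proof -
  define V where "V = grid_vertices m h"
  define \<mu> where "\<mu> = min d h"
  define a where "a = d * \<mu>"
  define A where "A = {..<d} \<times> {..<\<mu>}"
  define B where "B = {m-d..<m} \<times> {h-\<mu>..<h}"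
  define K where "K = a div 2"
  define N where "N = card V"
  define q where "q = 1 - (real a / (2 * real N))^2"
  have finV: "finite V" by (simp add: V_def grid_vertices_def)
  have NV: "N = m * h" by (simp add: N_def V_def grid_vertices_def card_cartesian_product)
  have \<mu>h: "\<mu> \<le> h" "\<mu> \<le> d" "1 \<le> \<mu>" using h1 d2 by (auto simp: \<mu>_def)
  have AV: "A \<subseteq> V" using dm \<mu>h by (auto simp: A_def V_def grid_vertices_def)
  have BV: "B \<subseteq> V" by (auto simp: B_def V_def grid_vertices_def)
  have cA: "card A = a" by (simp add: A_def a_def card_cartesian_product)
  have cB: "card B = a" using dm \<mu>h by (simp add: B_def a_def card_cartesian_product)
  have K2: "2 * K \<le> a" by (simp add: K_def)
  have bad: "real (card (BadS V A B n)) \<le> real (card (Inj V n))^2 * q ^ (min n K)"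
    using BadS_bound[OF finV AV BV, of a K n] cA cB K2 nN NV by (simp add: q_def N_def)
  have Ipos: "card (Inj V n) > 0"
    using card_Inj[OF finV, of n] nN NV N_def by (simp add: prod_pos)
  have a2: "2 \<le> a" using d2 \<mu>h proof -
    have "d * 1 \<le> d * \<mu>" using \<mu>h by (intro mult_le_mono2) auto
    then show ?thesis using d2 unfolding a_def by linarith
  qed
  have ad: "real a \<le> real d * real h" using \<mu>h by (simp add: a_def mult_left_mono)
  have Kq: "real a / 4 \<le> real (min n K)"
  proof -
    have "real a / 4 \<le> real K" using a2 unfolding K_def by linarith
    moreover have "real a / 4 \<le> real n" using ad na by linarith
    ultimately show ?thesis by simp
  qed
  have Npos: "real N > 0" using NV h1 dm d2 by simp
  have x0: "0 \<le> (real a / (2 * real N))^2" by simp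
  have aN: "a \<le> N" using card_mono[OF finV AV] cA N_def by simp
  have q0: "0 \<le> q"
  proof -
    have "real a / (2 * real N) \<le> 1" using aN Npos by (simp add: field_simps)
    then have "(real a / (2 * real N))^2 \<le> 1" by (simp add: power_le_one)
    then show ?thesis by (simp add: q_def)
  qed
  define x where "x = (real a / (2 * real N))^2"
  have "q ^ (min n K) \<le> (exp (- x)) ^ (min n K)"
    using q0 exp_ge_add_one_self[of "- x"] by (intro power_mono) (auto simp: q_def x_def)
  also have "\<dots> = exp (- x * real (min n K))"
    by (simp add: exp_of_nat_mult[symmetric] mult.commute)
  also have "\<dots> \<le> exp (- r / 16)"
  proof -
    have c: "r * (real m * real h)^2 \<le> real a ^ 3"
      using a_cube_bound[OF r1 m d3 h1 hm] by (simp add: a_def \<mu>_def)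
    have "x * (real a / 4) = real a ^ 3 / (16 * real N ^ 2)"
      by (simp add: x_def power2_eq_square power3_eq_cube field_simps)
    also have "\<dots> \<ge> r / 16"
    proof -
      have D: "0 < 16 * real N ^ 2" using Npos by simp
      have "r * real N ^ 2 \<le> real a ^ 3" using c NV by (simp add: power_mult_distrib mult.commute)
      then show ?thesis by (simp add: pos_le_divide_eq[OF D])
    qed
    finally have "r / 16 \<le> x * (real a / 4)" .
    also have "\<dots> \<le> x * real (min n K)" using Kq by (intro mult_left_mono) (auto simp: x_def)
    finally show ?thesis by simp
  qed
  finally have qe: "q ^ (min n K) \<le> exp (- r / 16)" .
  define Tot where "Tot = Inj V n \<times> Inj V n"
  define Good where "Good = {(s, g). s \<in> configs m h n \<and> g \<in> configs m h n \<and>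
                   (\<forall>T. feasible_makespan m h n s g T \<longrightarrow> real T \<ge> b)}"
  have sub: "Tot - BadS V A B n \<subseteq> Good"
  proof
    fix p assume p: "p \<in> Tot - BadS V A B n"
    obtain s g where pp: "p = (s,g)" by (cases p)
    have sI: "s \<in> Inj V n" "g \<in> Inj V n" using p pp by (auto simp: Tot_def)
    then obtain i where i: "i < n" "s i \<in> A" "g i \<in> B" using p pp by (auto simp: BadS_def)
    have "\<forall>T. feasible_makespan m h n s g T \<longrightarrow> real T \<ge> b"
    proof (intro allI impI)
      fix T assume "feasible_makespan m h n s g T"
      from makespan_ge[OF this i(1)]
      have T: "\<bar>int (fst (g i)) - int (fst (s i))\<bar> + \<bar>int (snd (g i)) - int (snd (s i))\<bar> \<le> int T" .
      have x: "int (fst (g i)) - int (fst (s i)) \<ge> int m - 2 * int d"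
        proof -
        have "fst (s i) < d" using i(2) by (auto simp: A_def)
        moreover have "m - d \<le> fst (g i)" using i(3) by (auto simp: B_def)
        ultimately show ?thesis using dm by linarith
      qed
      have y: "int (snd (g i)) - int (snd (s i)) \<ge> int h - 2 * int d"
        proof -
        have "snd (s i) < \<mu>" using i(2) by (auto simp: A_def)
        moreover have "h - \<mu> \<le> snd (g i)" using i(3) by (auto simp: B_def)
        ultimately show ?thesis using \<mu>h by linarith
      qed
      have "int m + int h - 4 * int d \<le> int T" using T x y by linarith
      then have "real m + real h - 4 * real d \<le> real T" by linarith
      then show "real T \<ge> b" using b by linarith
    qed
    then show "p \<in> Good" using sI pp by (simp add: Good_def configs_Inj V_def)
  qed
  have finT: "finite Tot" by (simp add: Tot_def finite_Inj[OF finV])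
  have BT: "BadS V A B n \<subseteq> Tot" by (auto simp: BadS_def Tot_def)
  have finG: "finite Good"
    by (rule finite_subset[of _ Tot]) (use finT in \<open>auto simp: Good_def Tot_def configs_Inj V_def\<close>)
  have "card Tot - card (BadS V A B n) \<le> card Good"
    using card_mono[OF finG sub] card_Diff_subset[OF finite_subset[OF BT finT] BT] by simp
  then have G: "real (card Tot) - real (card (BadS V A B n)) \<le> real (card Good)"
    using card_mono[OF finT BT] by linarith
  have cT: "real (card Tot) = real (card (Inj V n))^2"
    by (simp add: Tot_def card_cartesian_product power2_eq_square)
  have Tpos: "real (card Tot) > 0" using cT Ipos by simp
  have BE: "real (card (BadS V A B n)) \<le> real (card Tot) * exp (- r / 16)"
    by (rule order.trans[OF bad]) (use qe in \<open>simp add: cT mult_left_mono\<close>)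
  then have "1 - exp (- r / 16) \<le> real (card Good) / real (card Tot)"
    proof -
    have "real (card Tot) * (1 - exp (- r / 16)) \<le> real (card Good)" using G BE by (simp add: algebra_simps)
    then show ?thesis using Tpos by (simp add: pos_le_divide_eq mult.commute)
  qed
  moreover have "prob_min_makespan_ge m h n b = real (card Good) / real (card Tot)"
    by (simp add: prob_min_makespan_ge_def Good_def Tot_def configs_Inj V_def)
  ultimately show ?thesis by simp
qed


theorem mainTheorem2:
  fixes c :: real
  assumes "0 < c" and "c \<le> 1"
  shows "\<exists>f :: nat \<Rightarrow> real. f \<in> o(\<lambda>m. real m) \<and>
           (\<forall>\<epsilon>>0. \<exists>M. \<forall>m1 \<ge> M. \<forall>m2. 1 \<le> m2 \<and> m2 \<le> m1 \<longrightarrow>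
              prob_min_makespan_ge m1 m2 (nat \<lfloor>c * real m1 * real m2\<rfloor>)
                 (real m1 + real m2 - f m1) \<ge> 1 - \<epsilon>)"
proof (rule exI[where x="\<lambda>m::nat. 4 * (real m powr (3/4) + 1)"], intro conjI allI impI)
  show "(\<lambda>m::nat. 4 * (real m powr (3/4) + 1)) \<in> o(\<lambda>m. real m)" by real_asymp
next
  fix \<epsilon> :: real assume e: "\<epsilon> > 0"
  have ev: "eventually (\<lambda>m::nat. real m powr (3/4) + 1 \<le> real m \<and>
      1 \<le> c * real m - (real m powr (3/4) + 1)/4 \<and>
      exp (- (real m powr (1/4)) / 16) \<le> \<epsilon> \<and> 2 \<le> real m powr (3/4)) sequentially"
  proof -
    have 1: "eventually (\<lambda>m::nat. real m powr (3/4) + 1 \<le> real m) sequentially" by real_asymp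
    have 2: "eventually (\<lambda>m::nat. 1 \<le> c * real m - (real m powr (3/4) + 1)/4) sequentially"
      using assms(1) by real_asymp
    have 3: "eventually (\<lambda>m::nat. exp (- (real m powr (1/4)) / 16) \<le> \<epsilon>) sequentially"
      using e by real_asymp
    have 4: "eventually (\<lambda>m::nat. 2 \<le> real m powr (3/4)) sequentially" by real_asymp
    show ?thesis using eventually_conj[OF 1 eventually_conj[OF 2 eventually_conj[OF 3 4]]] .
  qed
  then obtain M where M: "\<And>m. m \<ge> M \<Longrightarrow> real m powr (3/4) + 1 \<le> real m \<and>
      1 \<le> c * real m - (real m powr (3/4) + 1)/4 \<and>
      exp (- (real m powr (1/4)) / 16) \<le> \<epsilon> \<and> 2 \<le> real m powr (3/4)"
    unfolding eventually_sequentially by blast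
  show "\<exists>M. \<forall>m1 \<ge> M. \<forall>m2. 1 \<le> m2 \<and> m2 \<le> m1 \<longrightarrow>
              prob_min_makespan_ge m1 m2 (nat \<lfloor>c * real m1 * real m2\<rfloor>)
                 (real m1 + real m2 - 4 * (real m1 powr (3/4) + 1)) \<ge> 1 - \<epsilon>"
  proof (intro exI allI impI)
    fix m h :: nat assume mM: "M \<le> m" and h: "1 \<le> h \<and> h \<le> m"
    note Mm = M[OF mM]
    define r where "r = real m powr (1/4)"
    define d where "d = nat \<lceil>real m powr (3/4)\<rceil>"
    define n where "n = nat \<lfloor>c * real m * real h\<rfloor>"
    have m0: "real m > 0" using Mm by (cases "m = 0") auto
    have r4: "r ^ 4 = real m" unfolding r_def using m0 by (simp add: powr_power)
    have r3: "r ^ 3 = real m powr (3/4)" unfolding r_def using m0 by (simp add: powr_power)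
    have r1: "1 \<le> r" unfolding r_def using m0 by (intro ge_one_powr_ge_zero) auto
    have dge: "real d \<ge> real m powr (3/4)" unfolding d_def by linarith
    have dle: "real d \<le> real m powr (3/4) + 1" unfolding d_def
    proof -
      have "0 \<le> real m powr (3/4)" by simp
      then have cx: "0 \<le> \<lceil>real m powr (3/4)\<rceil>" by linarith
      then have "real (nat \<lceil>real m powr (3/4)\<rceil>) = real_of_int \<lceil>real m powr (3/4)\<rceil>" by simp
      moreover have "real_of_int \<lceil>real m powr (3/4)\<rceil> < real m powr (3/4) + 1" by linarith
      ultimately show "real (nat \<lceil>real m powr (3/4)\<rceil>) \<le> real m powr (3/4) + 1" by simp
    qed
    have d3: "r^9 \<le> real d ^ 3"
    proof -
      have "r^9 = (r^3)^3" by (simp flip: power_mult)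
      also have "\<dots> \<le> real d ^ 3" using r3 dge r1 by (intro power_mono) auto
      finally show ?thesis .
    qed
    have d2: "2 \<le> d" using dge Mm by linarith
    have dm: "d \<le> m" using dle Mm by linarith
    have cmh: "0 \<le> c * real m * real h" using assms m0 by simp
    have nN: "n \<le> m * h"
    proof -
      have "c * real m * real h \<le> 1 * real m * real h" using assms m0 by (intro mult_right_mono) auto
      then have "\<lfloor>c * real m * real h\<rfloor> \<le> int (m * h)" by (simp add: floor_le_iff)
      then show ?thesis unfolding n_def by linarith
    qed
    have nlow: "real n \<ge> c * real m * real h - 1" unfolding n_def using cmh by linarith
    have na: "real d * real h \<le> 4 * real n"
    proof -
      have q1: "1 \<le> c * real m - (real m powr (3/4) + 1)/4" using Mm by blast
      have q2: "4 * c * real m = 4 * (c * real m)" by simp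
      have gen: "\<And>X P D::real. 1 \<le> X - (P+1)/4 \<Longrightarrow> D \<le> P + 1 \<Longrightarrow> 4 \<le> 4*X - D" by (simp add: field_simps)
      have "4 \<le> 4 * c * real m - real d" unfolding q2 by (rule gen[OF q1 dle])
      then have "4 * real h \<le> (4 * c * real m - real d) * real h" using h by (intro mult_right_mono) auto
      then show ?thesis using nlow h by (simp add: algebra_simps) 
    qed
    have b: "real m + real h - 4 * (real m powr (3/4) + 1) \<le> real m + real h - 4 * real d"
      using dle by (simp add: algebra_simps)
    have "prob_min_makespan_ge m h n (real m + real h - 4 * (real m powr (3/4) + 1)) \<ge> 1 - exp (- r / 16)"
      by (rule instance_bound[OF r1 r4[symmetric] d3 _ _ d2 dm nN na b]) (use h in auto)
    moreover have "exp (- r / 16) \<le> \<epsilon>" using Mm by (simp add: r_def)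
    ultimately show "prob_min_makespan_ge m h (nat \<lfloor>c * real m * real h\<rfloor>)
                 (real m + real h - 4 * (real m powr (3/4) + 1)) \<ge> 1 - \<epsilon>"
      unfolding n_def by linarith
  qed
qed

end
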